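(* Let $n=n(\theta)$ be positive integers with $n\to\infty$ and $\theta/n\to\infty$ as $\theta\to\infty$. Let $K_n(\theta)$ be a random variable with $P\{K_n(\theta)=k\}=|S_n^k|\theta^k/\theta_{(n)}$, $k=1,\dots,n$, where $\theta_{(n)}=\theta(\theta+1)\cdots(\theta+n-1)$ and $|S_n^k|$ is the coefficient of $\theta^k$ in $\theta_{(n)}$. Then, as $\theta\to\infty$, the family of laws of $K_n(\theta)/n$ satisfies an LDP on $[0,1]$ with speed $n\log\frac\theta n$ and rate function $I(x)=1-x$.
   Context: $K_n(\theta)$ is the number of distinct alleles in a sample of size $n$ from a $PD(\theta)$ population. An LDP with speed $a(\theta)$ uses normalization $a(\theta)^{-1}\log$ as $\theta\to\infty$. *)

theory Defs
  imports "HOL-Analysis.Analysis" "HOL-Combinatorics.Stirling"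
begin

text \<open>Ewens distribution of the number of distinct alleles:
  P{K_n(theta) = k} = |S_n^k| theta^k / theta_(n), where theta_(n) is the rising
  factorial (pochhammer) and |S_n^k| = stirling n k is the unsigned Stirling number of
  the first kind, i.e. the coefficient of theta^k in theta_(n) (lemma stirling_pochhammer).\<close>
definition Kprob :: "nat \<Rightarrow> real \<Rightarrow> nat \<Rightarrow> real" where
  "Kprob n \<theta> k = real (stirling n k) * \<theta> ^ k / pochhammer \<theta> n"

definition lawK :: "nat \<Rightarrow> real \<Rightarrow> real set \<Rightarrow> real" where
  "lawK n \<theta> A = (\<Sum>k\<in>{1..n}. if real k / real n \<in> A then Kprob n \<theta> k else 0)"

definition elog :: "real \<Rightarrow> ereal" where
  "elog x = (if x = 0 then - \<infinity> else ereal (ln x))"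

definition LDP01 :: "(real \<Rightarrow> real set \<Rightarrow> real) \<Rightarrow> (real \<Rightarrow> real) \<Rightarrow> (real \<Rightarrow> real) \<Rightarrow> bool" where
  "LDP01 \<mu> a I \<longleftrightarrow>
     (\<forall>F. closedin (top_of_set {0..1}) F \<longrightarrow>
        Limsup at_top (\<lambda>\<theta>. elog (\<mu> \<theta> F) / ereal (a \<theta>)) \<le> - (INF x\<in>F. ereal (I x))) \<and>
     (\<forall>G. openin (top_of_set {0..1}) G \<longrightarrow>
        Liminf at_top (\<lambda>\<theta>. elog (\<mu> \<theta> G) / ereal (a \<theta>)) \<ge> - (INF x\<in>G. ereal (I x)))"

end

theory Submission
  imports Defs
begin

lemma stirling_upper: "real (stirling n k) \<le> 2^n * real n ^ (n - k)"
proof (induction n arbitrary: k)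
  case 0 then show ?case by (cases k) auto
next
  case (Suc n)
  show ?case
  proof (cases k)
    case 0 then show ?thesis by simp
  next
    case (Suc j)
    have a: "real n * real (stirling n (Suc j)) \<le> 2^n * real n ^ (n - j)"
    proof (cases "Suc j \<le> n")
      case True
      have "real n * real (stirling n (Suc j)) \<le> real n * (2^n * real n ^ (n - Suc j))"
        using Suc.IH[of "Suc j"] by (intro mult_left_mono) auto
      also have "\<dots> = 2^n * real n ^ (n - j)" using True
        by (metis (no_types) Suc_diff_Suc Suc_le_lessD mult.left_commute power_Suc)
      finally show ?thesis .
    next
      case False then show ?thesis by simp
    qed
    have b: "real (stirling n j) \<le> 2^n * real n ^ (n - j)" using Suc.IH .
    have "real (stirling (Suc n) k) = real n * real (stirling n (Suc j)) + real (stirling n j)"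
      using Suc by simp
    also have "\<dots> \<le> 2^(Suc n) * real n ^ (n - j)" using a b by simp
    also have "\<dots> \<le> 2^(Suc n) * real (Suc n) ^ (Suc n - k)"
      using Suc by (auto intro!: mult_left_mono power_mono)
    finally show ?thesis .
  qed
qed

lemma stirling_lower: "1 \<le> k \<Longrightarrow> k \<le> n \<Longrightarrow> real k ^ (n - k) \<le> real (stirling n k)"
proof (induction n arbitrary: k)
  case 0 then show ?case by simp
next
  case (Suc n)
  show ?case
  proof (cases "k = Suc n")
    case True then show ?thesis by simp
  next
    case False
    then have kn: "k \<le> n" using Suc by simp
    obtain j where j: "k = Suc j" using Suc by (cases k) auto
    have "real k ^ (Suc n - k) = real k * real k ^ (n - k)" using kn
      by (simp add: Suc_diff_le)
    also have "\<dots> \<le> real n * real (stirling n k)"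
      using Suc.IH[OF Suc.prems(1) kn] kn by (intro mult_mono) auto
    also have "\<dots> \<le> real (stirling (Suc n) k)" using j by simp
    finally show ?thesis .
  qed
qed

lemma poch_bounds: assumes "0 < \<theta>" shows "\<theta>^n \<le> pochhammer \<theta> n" "pochhammer \<theta> n \<le> (\<theta> + real n)^n"
proof -
  have p: "pochhammer \<theta> n = (\<Prod>i\<in>{0..<n}. \<theta> + real i)" by (simp add: pochhammer_prod)
  have "(\<Prod>i\<in>{0..<n}. \<theta>) \<le> (\<Prod>i\<in>{0..<n}. \<theta> + real i)"
    using assms by (intro prod_mono) auto
  then show "\<theta>^n \<le> pochhammer \<theta> n" using p by simp
  have "(\<Prod>i\<in>{0..<n}. \<theta> + real i) \<le> (\<Prod>i\<in>{0..<n}. \<theta> + real n)"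
    using assms by (intro prod_mono) auto
  then show "pochhammer \<theta> n \<le> (\<theta> + real n)^n" using p by simp
qed

lemma elog_le: "0 \<le> y \<Longrightarrow> y \<le> B \<Longrightarrow> 0 < B \<Longrightarrow> elog y \<le> ereal (ln B)"
  by (auto simp: elog_def)

lemma elog_ge: "0 < b \<Longrightarrow> b \<le> y \<Longrightarrow> ereal (ln b) \<le> elog y"
  by (auto simp: elog_def)


lemma test1: "0 < (a::real) \<Longrightarrow> (-\<infinity>::ereal) / ereal a = -\<infinity>"
  by (simp add: divide_ereal_def)

lemma ln_ineq:
  fixes N K th L y :: real
  assumes N: "0 < N" and K: "y * N \<le> K" "K \<le> N" and y: "0 < y" "y \<le> 1"
    and th: "0 < th" and L: "L = ln (th / N)" "0 \<le> L" and Nth: "N / th \<le> 1"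
  shows "(N - K) * ln K + K * ln th - N * ln (th + N) \<ge> N * (-(1-y)*L + ln y - 1)"
proof -
  have Kp: "0 < K" using y N K by (meson less_le_trans mult_pos_pos)
  have lth: "ln th = L + ln N" using L th N by (simp add: ln_div)
  have "th + N = th * (1 + N/th)" using th by (simp add: field_simps)
  moreover have "0 < 1 + N/th" using th N by (simp add: add_pos_pos)
  ultimately have "ln (th + N) = ln th + ln (1 + N/th)" using th
    by (simp add: ln_mult)
  moreover have "ln (1 + N/th) \<le> N/th" using th N by (intro ln_add_one_self_le_self) auto
  ultimately have l1: "ln (th + N) \<le> ln th + 1" using Nth by linarith
  have "ln (y * N) \<le> ln K" using K y N Kp by (subst ln_le_cancel_iff) auto
  then have l2: "ln K \<ge> ln N + ln y" using y N by (simp add: ln_mult)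
  have "(N - K) * ln K \<ge> (N - K) * (ln N + ln y)" using l2 K by (intro mult_left_mono) auto
  moreover have "N * ln (th + N) \<le> N * (ln th + 1)" using l1 N by (intro mult_left_mono) auto
  ultimately have "(N - K) * ln K + K * ln th - N * ln (th + N) \<ge>
      (N - K) * (ln N + ln y) + K * ln th - N * (ln th + 1)" by linarith
  also have "(N - K) * (ln N + ln y) + K * ln th - N * (ln th + 1) = -(N-K)*L + (N-K)*ln y - N"
    unfolding lth by (simp add: algebra_simps)
  also have "-(N-K)*L \<ge> -(N*(1-y))*L" using K L by (intro mult_right_mono) (auto simp: algebra_simps)
  then have "-(N-K)*L + (N-K)*ln y - N \<ge> -(N*(1-y))*L + N * ln y - N"
  proof -
    have "ln y \<le> 0" using y by simp
    then have "(N-K)*ln y \<ge> N * ln y" using K Kp by (intro mult_right_mono_neg) auto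
    then show ?thesis using \<open>-(N-K)*L \<ge> -(N*(1-y))*L\<close> by linarith
  qed
  finally show ?thesis by (simp add: algebra_simps)
qed


lemma Kprob_nonneg: "0 < \<theta> \<Longrightarrow> 0 \<le> Kprob n \<theta> k"
  unfolding Kprob_def using pochhammer_pos[of \<theta> n] by simp

lemma lawK_nonneg: "0 < \<theta> \<Longrightarrow> 0 \<le> lawK n \<theta> A"
  unfolding lawK_def using Kprob_nonneg by (auto intro!: sum_nonneg)

lemma Kprob_upper:
  assumes th: "0 < \<theta>" and k: "k \<le> n"
  shows "Kprob n \<theta> k \<le> 2^n * (real n / \<theta>) ^ (n - k)"
proof -
  have pp: "0 < pochhammer \<theta> n" using pochhammer_pos th by auto
  have "Kprob n \<theta> k \<le> 2^n * real n ^ (n - k) * \<theta> ^ k / pochhammer \<theta> n"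
    unfolding Kprob_def using stirling_upper[of n k] th pp
    by (intro divide_right_mono mult_right_mono) auto
  also have "\<dots> \<le> 2^n * real n ^ (n - k) * \<theta> ^ k / \<theta> ^ n"
    using poch_bounds(1)[OF th, of n] th pp by (intro divide_left_mono) auto
  also have "\<theta> ^ n = \<theta> ^ k * \<theta> ^ (n - k)" using k by (simp add: power_add[symmetric])
  also have "2^n * real n ^ (n - k) * \<theta> ^ k / (\<theta> ^ k * \<theta> ^ (n - k)) = 2^n * (real n / \<theta>) ^ (n - k)"
    using th by (simp add: power_divide)
  finally show ?thesis .
qed

lemma Kprob_lower:
  assumes th: "0 < \<theta>" and k: "1 \<le> k" "k \<le> n"
  shows "real k ^ (n - k) * \<theta> ^ k / (\<theta> + real n) ^ n \<le> Kprob n \<theta> k"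
proof -
  have pp: "0 < pochhammer \<theta> n" using pochhammer_pos th by auto
  have "real k ^ (n - k) * \<theta> ^ k / (\<theta> + real n) ^ n \<le> real k ^ (n - k) * \<theta> ^ k / pochhammer \<theta> n"
    using poch_bounds(2)[OF th, of n] th pp by (intro divide_left_mono) auto
  also have "\<dots> \<le> Kprob n \<theta> k"
    unfolding Kprob_def using stirling_lower[OF k] th pp
    by (intro divide_right_mono mult_right_mono) auto
  finally show ?thesis .
qed


lemma upper_theta:
  assumes th: "0 < \<theta>" and n: "0 < n" and nth: "real n \<le> \<theta>"
    and c: "\<forall>x\<in>F. c \<le> 1 - x"
  shows "lawK n \<theta> F \<le> real n * 2^n * (real n / \<theta>) powr (real n * c)"
proof -
  define t where "t = real n / \<theta>"
  have t: "0 < t" "t \<le> 1" using th n nth by (auto simp: t_def)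
  have "lawK n \<theta> F \<le> (\<Sum>k\<in>{1..n}. 2^n * t powr (real n * c))"
    unfolding lawK_def
  proof (intro sum_mono)
    fix k assume k: "k \<in> {1..n}"
    show "(if real k / real n \<in> F then Kprob n \<theta> k else 0) \<le> 2^n * t powr (real n * c)"
    proof (cases "real k / real n \<in> F")
      case True
      then have "c \<le> 1 - real k / real n" using c by auto
      then have "real n * c \<le> real n * (1 - real k / real n)" using n by (intro mult_left_mono) auto
      also have "\<dots> = real (n - k)" using n k by (simp add: field_simps of_nat_diff)
      finally have e: "real n * c \<le> real (n - k)" .
      have "Kprob n \<theta> k \<le> 2^n * t ^ (n - k)" unfolding t_def using Kprob_upper[OF th] k by auto
      also have "t ^ (n - k) = t powr real (n - k)" using t by (simp add: powr_realpow)
      also have "2^n * t powr real (n - k) \<le> 2^n * t powr (real n * c)"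
        using powr_mono'[OF e, of t] t by auto
      finally show ?thesis using True by simp
    qed auto
  qed
  also have "\<dots> = real n * 2^n * t powr (real n * c)" by simp
  finally show ?thesis unfolding t_def .
qed

lemma lower_theta:
  assumes th: "0 < \<theta>" and n: "0 < n" and e: "exp 1 \<le> \<theta> / real n"
    and y: "0 < y" "y \<le> 1" and kdef: "k = nat \<lceil>y * real n\<rceil>"
  shows "1 \<le> k" "k \<le> n" "y \<le> real k / real n" "real k / real n < y + 1 / real n"
    "ereal (-(1-y) + (ln y - 1) * (1 / ln (\<theta> / real n)))
       \<le> elog (Kprob n \<theta> k) / ereal (real n * ln (\<theta> / real n))"
proof -
  have np: "0 < real n" using n by simp
  have yn: "0 < y * real n" using y np by simp
  have kr: "real k = of_int \<lceil>y * real n\<rceil>" using kdef yn by simp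
  have c1: "y * real n \<le> real k" using kr by simp
  have c2: "real k < y * real n + 1" using kr by linarith
  have kpos0: "0 < k" using c1 yn by (metis linorder_not_le of_nat_0_le_iff of_nat_le_0_iff not_gr0 order_trans less_le_not_le)
  show "1 \<le> k" using kpos0 by simp
  have yle: "y * real n \<le> real n" using y np by simp
  then have "\<lceil>y * real n\<rceil> \<le> int n" by (simp add: ceiling_le_iff)
  then show kn: "k \<le> n" using kdef yle by simp
  show "y \<le> real k / real n" using c1 np by (simp add: field_simps)
  show "real k / real n < y + 1 / real n" using c2 np by (simp add: field_simps)
  define L where "L = ln (\<theta> / real n)"
  have L1: "1 \<le> L" unfolding L_def using e th np by (subst ln_ge_iff) auto
  have Nth: "real n / \<theta> \<le> 1"
  proof -
    have "1 \<le> \<theta> / real n" using e exp_ge_add_one_self[of 1] by linarith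
    then show ?thesis using th np by (simp add: field_simps)
  qed
  have kpos: "0 < real k" using c1 yn by linarith
  define b where "b = real k ^ (n - k) * \<theta> ^ k / (\<theta> + real n) ^ n"
  have bpos: "0 < b" unfolding b_def using kpos th np by simp
  have lnb: "ln b = (real n - real k) * ln (real k) + real k * ln \<theta> - real n * ln (\<theta> + real n)"
    unfolding b_def using kpos th np kn
    by (simp add: ln_div ln_mult ln_realpow of_nat_diff)
  have "ln b \<ge> real n * (-(1-y)*L + ln y - 1)"
    unfolding lnb by (rule ln_ineq) (use np c1 kn y th L1 Nth L_def in auto)
  then have "ln b / (real n * L) \<ge> real n * (-(1-y)*L + ln y - 1) / (real n * L)"
    using np L1 by (intro divide_right_mono) auto
  also have "real n * (-(1-y)*L + ln y - 1) / (real n * L) = -(1-y) + (ln y - 1) * (1 / L)"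
    using np L1 by (simp add: field_simps)
  finally have A: "-(1-y) + (ln y - 1) * (1 / L) \<le> ln b / (real n * L)" .
  have "elog b \<le> elog (Kprob n \<theta> k)"
  proof -
    have "b \<le> Kprob n \<theta> k" unfolding b_def by (rule Kprob_lower[OF th \<open>1 \<le> k\<close> kn])
    from elog_ge[OF bpos this] show ?thesis using bpos by (simp add: elog_def)
  qed
  then have "elog b / ereal (real n * L) \<le> elog (Kprob n \<theta> k) / ereal (real n * L)"
    using np L1 by (intro ereal_divide_right_mono) auto
  moreover have "elog b / ereal (real n * L) = ereal (ln b / (real n * L))"
    using bpos np L1 by (simp add: elog_def)
  ultimately show "ereal (-(1-y) + (ln y - 1) * (1 / ln (\<theta> / real n)))
       \<le> elog (Kprob n \<theta> k) / ereal (real n * ln (\<theta> / real n))"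
    using A unfolding L_def[symmetric] by (metis order_trans ereal_less_eq(3))
qed


theorem theorem4p3:
  fixes n :: "real \<Rightarrow> nat"
  assumes "\<forall>\<theta>>0. n \<theta> > 0"
    and "filterlim n at_top at_top"
    and "filterlim (\<lambda>\<theta>. \<theta> / real (n \<theta>)) at_top at_top"
  shows "LDP01 (\<lambda>\<theta>. lawK (n \<theta>) \<theta>) (\<lambda>\<theta>. real (n \<theta>) * ln (\<theta> / real (n \<theta>))) (\<lambda>x. 1 - x)"
proof -
  define L where "L = (\<lambda>\<theta>. ln (\<theta> / real (n \<theta>)))"
  have E: "eventually (\<lambda>\<theta>. 0 < \<theta> \<and> 0 < n \<theta> \<and> exp 1 \<le> \<theta> / real (n \<theta>)) at_top"
  proof -
    have "eventually (\<lambda>\<theta>. exp 1 \<le> \<theta> / real (n \<theta>)) at_top"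
      using assms(3) by (simp add: filterlim_at_top)
    moreover have "eventually (\<lambda>\<theta>::real. 0 < \<theta>) at_top" by (rule eventually_gt_at_top)
    ultimately show ?thesis by eventually_elim (use assms(1) in auto)
  qed
  have Ltop: "filterlim L at_top at_top"
    unfolding L_def by (rule filterlim_compose[OF ln_at_top assms(3)])
  have invL: "((\<lambda>\<theta>. 1 / L \<theta>) \<longlongrightarrow> 0) at_top"
    using tendsto_inverse_0_at_top[OF Ltop] by (simp add: inverse_eq_divide)
  have nreal: "filterlim (\<lambda>\<theta>. real (n \<theta>)) at_top at_top"
    by (rule filterlim_compose[OF filterlim_real_sequentially assms(2)])
  have lnn: "((\<lambda>\<theta>. ln (real (n \<theta>)) / real (n \<theta>)) \<longlongrightarrow> 0) at_top"
    by (rule filterlim_compose[OF ln_x_over_x_tendsto_0 nreal])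
  have upper: "Limsup at_top (\<lambda>\<theta>. elog (lawK (n \<theta>) \<theta> F) / ereal (real (n \<theta>) * ln (\<theta> / real (n \<theta>))))
      \<le> - (INF x\<in>F. ereal (1 - x))" if F: "F \<subseteq> {0..1}" for F
  proof (cases "F = {}")
    case True
    have evm: "eventually (\<lambda>\<theta>. elog (lawK (n \<theta>) \<theta> F) / ereal (real (n \<theta>) * ln (\<theta> / real (n \<theta>))) \<le> -\<infinity>) at_top"
      using E
    proof eventually_elim
      case (elim \<theta>)
      then have "0 < real (n \<theta>) * ln (\<theta> / real (n \<theta>))"
        using ln_ge_iff[of "\<theta> / real (n \<theta>)" 1] by (auto intro!: mult_pos_pos simp: order_less_le_trans[OF zero_less_one])
      from test1[OF this] show ?case using True by (simp add: lawK_def elog_def)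
    qed
    from Limsup_mono[OF evm] have "Limsup at_top (\<lambda>\<theta>. elog (lawK (n \<theta>) \<theta> F) / ereal (real (n \<theta>) * ln (\<theta> / real (n \<theta>))))
       \<le> Limsup at_top (\<lambda>_::real. -\<infinity>::ereal)" .
    then show ?thesis using True by (simp add: Limsup_const)
  next
    case False
    then obtain x0 where x0: "x0 \<in> F" by auto
    define C where "C = (INF x\<in>F. ereal (1 - x))"
    have C0: "0 \<le> C" unfolding C_def using F by (intro INF_greatest) auto
    have C1: "C \<le> ereal (1 - x0)" unfolding C_def using x0 by (rule INF_lower)
    obtain c where c: "C = ereal c" using C0 C1 by (cases C) auto
    have cF: "\<forall>x\<in>F. c \<le> 1 - x"
      using c unfolding C_def by (metis INF_lower ereal_less_eq(3))
    define g where "g = (\<lambda>\<theta>. ln (real (n \<theta>)) / real (n \<theta>) * (1 / L \<theta>) + ln 2 * (1 / L \<theta>) - c)"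
    have glim: "(g \<longlongrightarrow> 0 * 0 + ln 2 * 0 - c) at_top"
      unfolding g_def by (intro tendsto_intros lnn invL)
    have ev: "eventually (\<lambda>\<theta>. elog (lawK (n \<theta>) \<theta> F) / ereal (real (n \<theta>) * ln (\<theta> / real (n \<theta>)))
        \<le> ereal (g \<theta>)) at_top"
      using E
    proof eventually_elim
      case (elim \<theta>)
      define N where "N = real (n \<theta>)"
      have th: "0 < \<theta>" and np: "0 < N" and e: "exp 1 \<le> \<theta> / N" using elim by (auto simp: N_def)
      have L1: "1 \<le> L \<theta>" unfolding L_def N_def[symmetric] using e th np by (subst ln_ge_iff) auto
      have Nth: "N \<le> \<theta>"
      proof -
        have "1 \<le> \<theta> / N" using e exp_ge_add_one_self[of 1] by linarith
        then show ?thesis using th np by (simp add: field_simps)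
      qed
      define B where "B = N * 2 ^ n \<theta> * (N / \<theta>) powr (N * c)"
      have Bp: "0 < B" unfolding B_def using np th by simp
      have lb: "lawK (n \<theta>) \<theta> F \<le> B" unfolding B_def N_def
        by (rule upper_theta) (use th elim Nth cF in \<open>auto simp: N_def\<close>)
      have el: "elog (lawK (n \<theta>) \<theta> F) \<le> ereal (ln B)"
        by (rule elog_le[OF lawK_nonneg[OF th] lb Bp])
      have lnB: "ln B = ln N + N * ln 2 - N * c * L \<theta>"
      proof -
        have "ln (N / \<theta>) = - L \<theta>" unfolding L_def N_def[symmetric] using np th by (simp add: ln_div)
        then show ?thesis unfolding B_def using np th N_def
          by (simp add: ln_mult ln_realpow ln_powr)
      qed
      have "elog (lawK (n \<theta>) \<theta> F) / ereal (N * L \<theta>) \<le> ereal (ln B) / ereal (N * L \<theta>)"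
        using el np L1 by (intro ereal_divide_right_mono) auto
      also have "\<dots> = ereal (ln B / (N * L \<theta>))" using np L1 by simp
      also have "ln B / (N * L \<theta>) = g \<theta>" unfolding lnB g_def N_def[symmetric] using np L1
        by (simp add: field_simps)
      finally show ?case unfolding N_def L_def .
    qed
    have "Limsup at_top (\<lambda>\<theta>. elog (lawK (n \<theta>) \<theta> F) / ereal (real (n \<theta>) * ln (\<theta> / real (n \<theta>))))
        \<le> Limsup at_top (\<lambda>\<theta>. ereal (g \<theta>))" by (rule Limsup_mono[OF ev])
    also have "\<dots> = ereal (-c)"
      by (rule lim_imp_Limsup) (use glim in \<open>auto intro: tendsto_ereal\<close>)
    finally show ?thesis using c unfolding C_def by simp
  qed
  have lower1: "ereal (-(1-y)) \<le> Liminf at_top (\<lambda>\<theta>. elog (lawK (n \<theta>) \<theta> G) / ereal (real (n \<theta>) * ln (\<theta> / real (n \<theta>))))"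
    if y: "0 < y" "y \<le> 1" and e: "0 < e" and G: "\<forall>x'\<in>{0..1}. dist x' y < e \<longrightarrow> x' \<in> G" for G y e
  proof -
    define g where "g = (\<lambda>\<theta>. -(1-y) + (ln y - 1) * (1 / L \<theta>))"
    have glim: "(g \<longlongrightarrow> -(1-y) + (ln y - 1) * 0) at_top"
      unfolding g_def by (intro tendsto_intros invL)
    have "eventually (\<lambda>\<theta>. 2 / e \<le> real (n \<theta>)) at_top" using nreal by (simp add: filterlim_at_top)
    with E have ev: "eventually (\<lambda>\<theta>. ereal (g \<theta>) \<le> elog (lawK (n \<theta>) \<theta> G) / ereal (real (n \<theta>) * ln (\<theta> / real (n \<theta>)))) at_top"
    proof eventually_elim
      case (elim \<theta>)
      define k where "k = nat \<lceil>y * real (n \<theta>)\<rceil>"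
      have th: "0 < \<theta>" and np: "0 < n \<theta>" and ee: "exp 1 \<le> \<theta> / real (n \<theta>)" using elim by auto
      note lt = lower_theta[OF th np ee y k_def]
      have "1 / real (n \<theta>) \<le> e / 2" using elim e np by (simp add: field_simps)
      then have d: "dist (real k / real (n \<theta>)) y < e" using lt(3,4) e by (simp add: dist_real_def)
      have "real k / real (n \<theta>) \<in> {0..1}" using lt(2) np by simp
      with d G have kG: "real k / real (n \<theta>) \<in> G" by auto
      have "Kprob (n \<theta>) \<theta> k \<le> lawK (n \<theta>) \<theta> G"
        unfolding lawK_def
        using member_le_sum[of k "{1..n \<theta>}" "\<lambda>k. if real k / real (n \<theta>) \<in> G then Kprob (n \<theta>) \<theta> k else 0"]
          lt(1,2) kG Kprob_nonneg[OF th] by auto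
      then have "elog (Kprob (n \<theta>) \<theta> k) \<le> elog (lawK (n \<theta>) \<theta> G)"
        using Kprob_nonneg[OF th, of "n \<theta>" k] by (auto simp: elog_def)
      then have "elog (Kprob (n \<theta>) \<theta> k) / ereal (real (n \<theta>) * ln (\<theta> / real (n \<theta>)))
          \<le> elog (lawK (n \<theta>) \<theta> G) / ereal (real (n \<theta>) * ln (\<theta> / real (n \<theta>)))"
      proof (rule ereal_divide_right_mono)
        have "1 \<le> ln (\<theta> / real (n \<theta>))" using ee th np by (subst ln_ge_iff) auto
        then show "0 < ereal (real (n \<theta>) * ln (\<theta> / real (n \<theta>)))" using np by simp
      qed
      with lt(5) show ?case unfolding g_def L_def by (rule order_trans)
    qed
    have "ereal (-(1-y)) = Liminf at_top (\<lambda>\<theta>. ereal (g \<theta>))"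
      by (rule lim_imp_Liminf[symmetric]) (use glim in \<open>auto intro: tendsto_ereal\<close>)
    also have "\<dots> \<le> Liminf at_top (\<lambda>\<theta>. elog (lawK (n \<theta>) \<theta> G) / ereal (real (n \<theta>) * ln (\<theta> / real (n \<theta>))))"
      by (rule Liminf_mono[OF ev])
    finally show ?thesis .
  qed
  show ?thesis unfolding LDP01_def
  proof (intro conjI allI impI)
    fix F :: "real set" assume "closedin (top_of_set {0..1}) F"
    then have "F \<subseteq> {0..1}" by (rule closedin_imp_subset)
    then show "Limsup at_top (\<lambda>\<theta>. elog (lawK (n \<theta>) \<theta> F) / ereal (real (n \<theta>) * ln (\<theta> / real (n \<theta>))))
      \<le> - (INF x\<in>F. ereal (1 - x))" by (rule upper)
  next
    fix G :: "real set" assume "openin (top_of_set {0..1}) G"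
    then have G: "G \<subseteq> {0..1}" "\<forall>x\<in>G. \<exists>e>0. \<forall>x'\<in>{0..1}. dist x' x < e \<longrightarrow> x' \<in> G"
      by (auto simp: openin_euclidean_subtopology_iff)
    define LI where "LI = Liminf at_top (\<lambda>\<theta>. elog (lawK (n \<theta>) \<theta> G) / ereal (real (n \<theta>) * ln (\<theta> / real (n \<theta>))))"
    have "-LI \<le> (INF x\<in>G. ereal (1 - x))"
    proof (rule INF_greatest)
      fix x assume x: "x \<in> G"
      then obtain e where e: "0 < e" "\<forall>x'\<in>{0..1}. dist x' x < e \<longrightarrow> x' \<in> G" using G by blast
      obtain y where y: "0 < y" "y \<le> 1" "y \<in> G" "1 - y \<le> 1 - x"
      proof (cases "x = 0")
        case True
        define y where "y = min (e/2) 1"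
        have "0 < y" "y \<le> 1" using e by (auto simp: y_def)
        moreover have "y \<in> G" using e \<open>0 < y\<close> \<open>y \<le> 1\<close> True by (auto simp: y_def dist_real_def)
        moreover have "1 - y \<le> 1 - x" using True \<open>0 < y\<close> by simp
        ultimately show ?thesis using that by blast
      next
        case False
        have "0 < x" "x \<le> 1" using False x G(1) by force+
        then show ?thesis using that x by blast
      qed
      obtain e' where e': "0 < e'" "\<forall>x'\<in>{0..1}. dist x' y < e' \<longrightarrow> x' \<in> G" using G y(3) by blast
      have "ereal (-(1-y)) \<le> LI" unfolding LI_def by (rule lower1[OF y(1,2) e'])
      then have "-LI \<le> ereal (1-y)" by (subst ereal_uminus_le_reorder) simp
      also have "\<dots> \<le> ereal (1 - x)" using y(4) by simp
      finally show "-LI \<le> ereal (1 - x)" .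
    qed
    then show "- (INF x\<in>G. ereal (1 - x)) \<le> LI" by (simp add: ereal_uminus_le_reorder)
  qed
qed

end
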